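(* For $i\neq j$ let $a_{ij}=\frac{(n-1)(2-\omega_i-\omega_j)\eta}{n}$. For any constant $\varepsilon\in(0,\eta)$ let $c_\varepsilon=\min\{\max_{i\ne j}a_{ij}-2\varepsilon,1\}$. Then the set $E_{c_\varepsilon}=\{(x_1,\dots,x_n)\in[0,1]^n:\max_{i,j}|x_i-x_j|\ge c_\varepsilon\}$ is finite-time robustly reachable from $[0,1]^n$ under control protocol (C6).
   Context: Fix $n\ge3$, $\mathcal V=\{1,\dots,n\}$, confidence thresholds $r_i\in(0,1]$, belief factors $\omega_i\in(0,1)$, $\eta>0$. States $x(t)\in[0,1]^n$. Neighbor set $\mathcal N_i(t)=\{j:|x_j(t)-x_i(t)|\le r_i\}$ (contains $i$), $\Pi_{[0,1]}(y)=\min\{1,\max\{0,y\}\}$, $x_{\rm ave}(t)=\frac1n\sum_ix_i(t)$. Control protocol (C6): $x_i(t+1)=\Pi_{[0,1]}\big(\omega_ix_{\rm ave}(t)+\frac{1-\omega_i}{|\mathcal N_i(t)|}[x_i(t)+\sum_{j\in\mathcal N_i(t)\setminus\{i\}}(x_j(t)+u_{ji}(t)+b_{ji}(t))]\big)$, where for $j\in\mathcal N_i(t)\setminus\{i\}$: $\delta_i(t)\in(0,\eta)$ is a chosen parameter, $u_{ji}(t)\in[-\eta+\delta_i(t),\eta-\delta_i(t)]$ a chosen control input, $b_{ji}(t)\in[-\delta_i(t),\delta_i(t)]$ an arbitrary uncertainty; the choices may depend on $x(0),\dots,x(t)$. A set $S\subseteq[0,1]^n$ is finite-time robustly reachable from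 $[0,1]^n$ under the protocol if there exist constants $T>0$ and $\varepsilon'\in(0,\eta)$ such that for every $x(0)\in[0,1]^n$, either $x(0)\in S$, or one can choose $\delta_i(t)\in[\varepsilon',\eta)$ and $u_{ji}(t)\in[-\eta+\delta_i(t),\eta-\delta_i(t)]$ ($0\le t<T$, $i\in\mathcal V$, $j\in\mathcal N_i(t)\setminus\{i\}$) guaranteeing that for arbitrary $b_{ji}(t)\in[-\delta_i(t),\delta_i(t)]$ there is $t\in[1,T]$ with $x(t)\in S$. *)

theory Defs
  imports Complex_Main
begin

text \<open>Agents are indexed by 0..<n (the paper uses 1..n). A state is a function
  nat => real, only the values at indices < n matter.\<close>

definition proj01 :: "real \<Rightarrow> real" where
  "proj01 y = min 1 (max 0 y)"

definition x_ave :: "nat \<Rightarrow> (nat \<Rightarrow> real) \<Rightarrow> real" where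
  "x_ave n x = (\<Sum>i<n. x i) / real n"

definition nbr :: "nat \<Rightarrow> (nat \<Rightarrow> real) \<Rightarrow> (nat \<Rightarrow> real) \<Rightarrow> nat \<Rightarrow> nat set" where
  "nbr n r x i = {j. j < n \<and> \<bar>x j - x i\<bar> \<le> r i}"

text \<open>One step of protocol (C6). u j i = u_ji(t), b j i = b_ji(t).\<close>
definition step_C6 :: "nat \<Rightarrow> (nat \<Rightarrow> real) \<Rightarrow> (nat \<Rightarrow> real) \<Rightarrow> (nat \<Rightarrow> real)
    \<Rightarrow> (nat \<Rightarrow> nat \<Rightarrow> real) \<Rightarrow> (nat \<Rightarrow> nat \<Rightarrow> real) \<Rightarrow> (nat \<Rightarrow> real)" where
  "step_C6 n r \<omega> x u b = (\<lambda>i. proj01 (\<omega> i * x_ave n x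
      + (1 - \<omega> i) / real (card (nbr n r x i))
        * (x i + (\<Sum>j\<in>nbr n r x i - {i}. x j + u j i + b j i))))"

text \<open>History [x(0),...,x(t)] generated by a controller strategy (D, U), which maps
  the time and the history so far to delta_i(t) (D t h i) and u_ji(t) (U t h j i),
  and an uncertainty sequence B (B t j i = b_ji(t)).\<close>
primrec hist_C6 :: "nat \<Rightarrow> (nat \<Rightarrow> real) \<Rightarrow> (nat \<Rightarrow> real) \<Rightarrow> (nat \<Rightarrow> real)
    \<Rightarrow> (nat \<Rightarrow> (nat \<Rightarrow> real) list \<Rightarrow> nat \<Rightarrow> real)
    \<Rightarrow> (nat \<Rightarrow> (nat \<Rightarrow> real) list \<Rightarrow> nat \<Rightarrow> nat \<Rightarrow> real)
    \<Rightarrow> (nat \<Rightarrow> nat \<Rightarrow> nat \<Rightarrow> real) \<Rightarrow> nat \<Rightarrow> (nat \<Rightarrow> real) list" where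
  "hist_C6 n r \<omega> x0 D U B 0 = [x0]"
| "hist_C6 n r \<omega> x0 D U B (Suc t) =
     (let h = hist_C6 n r \<omega> x0 D U B t
      in h @ [step_C6 n r \<omega> (last h) (U t h) (B t)])"

definition traj_C6 where
  "traj_C6 n r \<omega> x0 D U B t = last (hist_C6 n r \<omega> x0 D U B t)"

definition cube :: "nat \<Rightarrow> (nat \<Rightarrow> real) set" where
  "cube n = {x. \<forall>i<n. 0 \<le> x i \<and> x i \<le> 1}"

definition ft_robustly_reachable ::
  "nat \<Rightarrow> (nat \<Rightarrow> real) \<Rightarrow> (nat \<Rightarrow> real) \<Rightarrow> real \<Rightarrow> (nat \<Rightarrow> real) set \<Rightarrow> bool" where
  "ft_robustly_reachable n r \<omega> \<eta> S \<longleftrightarrow>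
    (\<exists>T::nat. T > 0 \<and> (\<exists>\<epsilon>'. 0 < \<epsilon>' \<and> \<epsilon>' < \<eta> \<and>
      (\<forall>x0 \<in> cube n. x0 \<in> S \<or>
        (\<exists>D U.
           (\<forall>t h i. i < n \<longrightarrow> \<epsilon>' \<le> D t h i \<and> D t h i < \<eta>) \<and>
           (\<forall>t h i j. i < n \<longrightarrow> j < n \<longrightarrow> \<bar>U t h j i\<bar> \<le> \<eta> - D t h i) \<and>
           (\<forall>B. (\<forall>t<T. \<forall>i<n. \<forall>j\<in>nbr n r (traj_C6 n r \<omega> x0 D U B t) i - {i}.
                     \<bar>B t j i\<bar> \<le> D t (hist_C6 n r \<omega> x0 D U B t) i)
                \<longrightarrow> (\<exists>t\<in>{1..T}. traj_C6 n r \<omega> x0 D U B t \<in> S))))))"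

definition a_coef :: "nat \<Rightarrow> (nat \<Rightarrow> real) \<Rightarrow> real \<Rightarrow> nat \<Rightarrow> nat \<Rightarrow> real" where
  "a_coef n \<omega> \<eta> i j = real (n - 1) * (2 - \<omega> i - \<omega> j) * \<eta> / real n"

definition E_set :: "nat \<Rightarrow> real \<Rightarrow> (nat \<Rightarrow> real) set" where
  "E_set n c = {x \<in> cube n. Max {\<bar>x i - x j\<bar> | i j. i < n \<and> j < n} \<ge> c}"

end

theory Submission
  imports Defs
begin

lemma traj_Suc:
  "traj_C6 n r \<omega> x0 D U B (Suc t) =
   step_C6 n r \<omega> (traj_C6 n r \<omega> x0 D U B t) (U t (hist_C6 n r \<omega> x0 D U B t)) (B t)"
  by (simp add: traj_C6_def Let_def)

lemma traj_0: "traj_C6 n r \<omega> x0 D U B 0 = x0"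
  by (simp add: traj_C6_def)

lemma proj01_bounds: "0 \<le> proj01 y" "proj01 y \<le> 1"
  by (auto simp: proj01_def)

lemma proj01_mono: "y \<le> w \<Longrightarrow> proj01 y \<le> proj01 w"
  by (auto simp: proj01_def)

lemma proj01_lip: "y \<le> w \<Longrightarrow> proj01 w \<le> proj01 y + (w - y)"
  by (auto simp: proj01_def)

lemma proj01_id: "0 \<le> y \<Longrightarrow> y \<le> 1 \<Longrightarrow> proj01 y = y"
  by (auto simp: proj01_def)

lemma proj01_near: "0 \<le> a \<Longrightarrow> a \<le> 1 \<Longrightarrow> \<bar>proj01 y - a\<bar> \<le> \<bar>y - a\<bar>"
  by (auto simp: proj01_def)

lemma proj01_split: "c \<le> 1 \<Longrightarrow> c \<le> y \<Longrightarrow> c \<le> 1 - w \<Longrightarrow> c \<le> y - w \<Longrightarrow> c \<le> proj01 y - proj01 w"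
  by (auto simp: proj01_def)

lemma step_cube: "step_C6 n r \<omega> x u b \<in> cube n"
  by (simp add: step_C6_def cube_def proj01_bounds)

lemma nbr_basic: "i < n \<Longrightarrow> 0 \<le> r i \<Longrightarrow> i \<in> nbr n r x i" "finite (nbr n r x i)" "nbr n r x i \<subseteq> {..<n}"
  by (auto simp: nbr_def)

lemma pre_eq:
  assumes "i < n" "0 \<le> r i"
  shows "step_C6 n r \<omega> x u b i = proj01 (\<omega> i * x_ave n x
      + (1 - \<omega> i) / real (card (nbr n r x i)) * (\<Sum>j\<in>nbr n r x i. x j)
      + (1 - \<omega> i) / real (card (nbr n r x i)) * (\<Sum>j\<in>nbr n r x i - {i}. u j i + b j i))"
proof -
  have "(\<Sum>j\<in>nbr n r x i. x j) = x i + (\<Sum>j\<in>nbr n r x i - {i}. x j)"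
    using nbr_basic assms by (simp add: sum.remove)
  moreover have "(\<Sum>j\<in>nbr n r x i - {i}. x j + u j i + b j i) = (\<Sum>j\<in>nbr n r x i - {i}. x j) + (\<Sum>j\<in>nbr n r x i - {i}. u j i + b j i)"
    by (simp add: sum.distrib add.assoc)
  ultimately show ?thesis unfolding step_C6_def by (simp add: algebra_simps)
qed

lemma sum_abs_le:
  assumes "finite A" "\<forall>j\<in>A. \<bar>f j\<bar> \<le> (d::real)"
  shows "\<bar>sum f A\<bar> \<le> real (card A) * d"
proof -
  have "\<bar>sum f A\<bar> \<le> (\<Sum>j\<in>A. \<bar>f j\<bar>)" by (rule sum_abs)
  also have "\<dots> \<le> (\<Sum>j\<in>A. d)" using assms(2) by (intro sum_mono) auto
  finally show ?thesis by simp
qed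

lemma full_nbr:
  assumes "i < n" "0 \<le> r i" "\<forall>j<n. \<bar>x j - x i\<bar> \<le> r i"
  shows "nbr n r x i = {..<n}"
  using assms by (auto simp: nbr_def)

lemma full_step:
  assumes "i < n" "0 \<le> r i" "\<forall>j<n. \<bar>x j - x i\<bar> \<le> r i"
    and "\<forall>j\<in>{..<n}-{i}. u j i = v" "\<forall>j\<in>{..<n}-{i}. \<bar>b j i\<bar> \<le> \<delta>"
    and "\<omega> i \<le> 1"
  shows "\<exists>e. \<bar>e\<bar> \<le> real (n-1) * (1 - \<omega> i) / real n * \<delta> \<and>
     step_C6 n r \<omega> x u b i = proj01 (x_ave n x + real (n-1) * (1 - \<omega> i) / real n * v + e)"
proof -
  have N: "nbr n r x i = {..<n}" using full_nbr assms by blast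
  have n0: "real n > 0" using assms(1) by simp
  have c: "card ({..<n} - {i}) = n - 1" using assms(1) by simp
  have S: "(\<Sum>j\<in>{..<n} - {i}. u j i + b j i) = real (n-1) * v + (\<Sum>j\<in>{..<n} - {i}. b j i)"
    using assms(4) c by (simp add: sum.distrib)
  define e where "e = (1 - \<omega> i) / real n * (\<Sum>j\<in>{..<n} - {i}. b j i)"
  have "\<bar>(\<Sum>j\<in>{..<n} - {i}. b j i)\<bar> \<le> real (n-1) * \<delta>"
    using sum_abs_le[of "{..<n} - {i}" "\<lambda>j. b j i" \<delta>] assms(5) c by simp
  hence "(1 - \<omega> i) * \<bar>(\<Sum>j\<in>{..<n} - {i}. b j i)\<bar> \<le> (1 - \<omega> i) * (real (n-1) * \<delta>)"
    using assms(6) by (intro mult_left_mono) auto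
  hence "(1 - \<omega> i) * \<bar>(\<Sum>j\<in>{..<n} - {i}. b j i)\<bar> / real n \<le> (1 - \<omega> i) * (real (n-1) * \<delta>) / real n"
    using n0 by (intro divide_right_mono) auto
  hence "\<bar>e\<bar> \<le> (1 - \<omega> i) / real n * (real (n-1) * \<delta>)"
    unfolding e_def using assms(6) n0 by (simp add: abs_mult)
  hence E: "\<bar>e\<bar> \<le> real (n-1) * (1 - \<omega> i) / real n * \<delta>" by (simp add: field_simps)
  have A: "\<omega> i * x_ave n x + (1 - \<omega> i) / real n * (\<Sum>j<n. x j) = x_ave n x"
    using n0 by (simp add: x_ave_def field_simps)
  have P: "step_C6 n r \<omega> x u b i = proj01 (\<omega> i * x_ave n x + (1 - \<omega> i) / real n * (\<Sum>j<n. x j)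
       + (1 - \<omega> i) / real n * (real (n-1) * v + (\<Sum>j\<in>{..<n} - {i}. b j i)))"
    using pre_eq[where i=i and n=n and r=r and \<omega>=\<omega> and x=x and u=u and b=b, OF assms(1,2)] N S
    by simp
  have "\<omega> i * x_ave n x + (1 - \<omega> i) / real n * (\<Sum>j<n. x j)
       + (1 - \<omega> i) / real n * (real (n-1) * v + (\<Sum>j\<in>{..<n} - {i}. b j i))
      = x_ave n x + real (n-1) * (1 - \<omega> i) / real n * v + e"
    unfolding A e_def by (simp add: algebra_simps)
  hence "step_C6 n r \<omega> x u b i = proj01 (x_ave n x + real (n-1) * (1 - \<omega> i) / real n * v + e)"
    using P by simp
  with E show ?thesis by blast
qed

lemma phase1_step:
  assumes "i < n" "0 \<le> r i" "\<forall>k<n. lo \<le> x k \<and> x k \<le> lo + s"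
    and "\<forall>j\<in>nbr n r x i - {i}. u j i = 0" "\<forall>j\<in>nbr n r x i - {i}. \<bar>b j i\<bar> \<le> \<delta>"
    and "0 \<le> wm" "wm \<le> \<omega> i" "\<omega> i \<le> 1" "0 \<le> \<delta>"
  shows "\<exists>y. wm * x_ave n x + (1 - wm) * lo - \<delta> \<le> y \<and>
     y \<le> wm * x_ave n x + (1 - wm) * lo - \<delta> + ((1 - wm) * s + 2 * \<delta>) \<and>
     step_C6 n r \<omega> x u b i = proj01 y"
proof -
  let ?N = "nbr n r x i"
  have fin: "finite ?N" and iN: "i \<in> ?N" and sub: "?N \<subseteq> {..<n}" using nbr_basic assms(1,2) by auto
  have cpos: "card ?N > 0" using fin iN card_gt_0_iff by blast
  hence cp: "real (card ?N) > 0" by simp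
  have n0: "real n > 0" using assms(1) by simp
  define m where "m = (\<Sum>j\<in>?N. x j) / real (card ?N)"
  have "(\<Sum>j\<in>?N. lo) \<le> (\<Sum>j\<in>?N. x j)" using assms(3) sub by (intro sum_mono) auto
  hence m1: "lo \<le> m" unfolding m_def using cp by (simp add: field_simps)
  have "(\<Sum>j\<in>?N. x j) \<le> (\<Sum>j\<in>?N. lo + s)" using assms(3) sub by (intro sum_mono) auto
  hence m2: "m \<le> lo + s" unfolding m_def using cp by (simp add: field_simps)
  have "(\<Sum>j<n. lo) \<le> (\<Sum>j<n. x j)" using assms(3) by (intro sum_mono) auto
  hence a1: "lo \<le> x_ave n x" unfolding x_ave_def using n0 by (simp add: field_simps)
  have "(\<Sum>j<n. x j) \<le> (\<Sum>j<n. lo + s)" using assms(3) by (intro sum_mono) auto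
  hence a2: "x_ave n x \<le> lo + s" unfolding x_ave_def using n0 by (simp add: field_simps)
  define e where "e = (1 - \<omega> i) / real (card ?N) * (\<Sum>j\<in>?N - {i}. b j i)"
  have cN: "card (?N - {i}) = card ?N - 1" using fin iN by simp
  have "\<bar>(\<Sum>j\<in>?N - {i}. b j i)\<bar> \<le> real (card (?N - {i})) * \<delta>"
    using sum_abs_le[of "?N - {i}" "\<lambda>j. b j i" \<delta>] assms(5) fin by simp
  also have "\<dots> \<le> real (card ?N) * \<delta>" using cN assms(9) cpos by (intro mult_right_mono) auto
  finally have sb: "\<bar>(\<Sum>j\<in>?N - {i}. b j i)\<bar> \<le> real (card ?N) * \<delta>" .
  have "\<bar>e\<bar> = (1 - \<omega> i) * (\<bar>(\<Sum>j\<in>?N - {i}. b j i)\<bar> / real (card ?N))"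
    unfolding e_def using assms(8) cp by (simp add: abs_mult)
  also have "\<dots> \<le> (1 - \<omega> i) * \<delta>"
    using sb cp assms(8) by (intro mult_left_mono) (auto simp: field_simps)
  also have "\<dots> \<le> \<delta>" using assms(6,7,9) mult_nonneg_nonneg[of "\<omega> i" \<delta>] by (simp add: algebra_simps)
  finally have eb: "\<bar>e\<bar> \<le> \<delta>" .
  have S: "(\<Sum>j\<in>?N - {i}. u j i + b j i) = (\<Sum>j\<in>?N - {i}. b j i)"
    using assms(4) by (intro sum.cong) auto
  define y where "y = \<omega> i * x_ave n x + (1 - \<omega> i) * m + e"
  have st: "step_C6 n r \<omega> x u b i = proj01 y"
    using pre_eq[where i=i and n=n and r=r and \<omega>=\<omega> and x=x and u=u and b=b, OF assms(1,2)] S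
    unfolding y_def m_def e_def by simp
  have p1: "(\<omega> i - wm) * lo \<le> (\<omega> i - wm) * x_ave n x" using a1 assms(7) by (intro mult_left_mono) auto
  have p2: "(\<omega> i - wm) * x_ave n x \<le> (\<omega> i - wm) * (lo + s)" using a2 assms(7) by (intro mult_left_mono) auto
  have p3: "(1 - \<omega> i) * lo \<le> (1 - \<omega> i) * m" using m1 assms(8) by (intro mult_left_mono) auto
  have p4: "(1 - \<omega> i) * m \<le> (1 - \<omega> i) * (lo + s)" using m2 assms(8) by (intro mult_left_mono) auto
  have "wm * x_ave n x + (1 - wm) * lo - \<delta> \<le> y"
    unfolding y_def using p1 p3 eb by (simp add: algebra_simps)
  moreover have "y \<le> wm * x_ave n x + (1 - wm) * lo - \<delta> + ((1 - wm) * s + 2 * \<delta>)"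
    unfolding y_def using p2 p4 eb by (simp add: algebra_simps)
  ultimately show ?thesis using st by blast
qed

lemma ave_bounds:
  assumes "0 < n" "\<forall>k<n. lo \<le> x k \<and> x k \<le> hi"
  shows "lo \<le> x_ave n x" "x_ave n x \<le> hi"
proof -
  have n0: "real n > 0" using assms by simp
  have "(\<Sum>j<n. lo) \<le> (\<Sum>j<n. x j)" using assms by (intro sum_mono) auto
  thus "lo \<le> x_ave n x" unfolding x_ave_def using n0 by (simp add: field_simps)
  have "(\<Sum>j<n. x j) \<le> (\<Sum>j<n. hi)" using assms by (intro sum_mono) auto
  thus "x_ave n x \<le> hi" unfolding x_ave_def using n0 by (simp add: field_simps)
qed

lemma spread_full:
  fixes x r :: "nat \<Rightarrow> real"
  assumes "\<forall>k<n. lo \<le> x k \<and> x k \<le> lo + s" "\<forall>i<n. s \<le> r i" "i < n"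
  shows "\<forall>j<n. \<bar>x j - x i\<bar> \<le> r i"
proof (intro allI impI)
  fix j assume j: "j < n"
  have "lo \<le> x j \<and> x j \<le> lo + s" "lo \<le> x i \<and> x i \<le> lo + s" "s \<le> r i"
    using assms j by auto
  thus "\<bar>x j - x i\<bar> \<le> r i" by (auto simp: abs_if)
qed

lemma nav_arith:
  fixes z \<tau> \<delta> Dm K :: real
  assumes "0 < \<delta>" "2 * \<delta> \<le> Dm" "\<bar>z - \<tau>\<bar> \<le> max \<delta> (1 - K * Dm / 2)"
  shows "\<bar>z + max (- Dm) (min Dm (\<tau> - z)) - \<tau>\<bar> + \<delta> \<le> max \<delta> (1 - (K + 1) * Dm / 2)"
proof (cases "\<bar>\<tau> - z\<bar> \<le> Dm")
  case True
  hence "max (- Dm) (min Dm (\<tau> - z)) = \<tau> - z" by (auto simp: abs_if max_def min_def split: if_splits)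
  thus ?thesis by simp
next
  case False
  hence d: "\<bar>z - \<tau>\<bar> \<le> 1 - K * Dm / 2" using assms by (auto simp: abs_if max_def split: if_splits)
  have "\<bar>z + max (- Dm) (min Dm (\<tau> - z)) - \<tau>\<bar> = \<bar>z - \<tau>\<bar> - Dm" using False assms
    by (auto simp: abs_if max_def min_def split: if_splits)
  hence "\<bar>z + max (- Dm) (min Dm (\<tau> - z)) - \<tau>\<bar> + \<delta> \<le> 1 - (K + 1) * Dm / 2"
    using d assms by (simp add: algebra_simps add_divide_distrib)
  thus ?thesis by simp
qed

lemma nav_range:
  fixes z \<tau> Dm :: real
  assumes "0 \<le> z" "z \<le> 1" "0 \<le> \<tau>" "\<tau> \<le> 1" "0 < Dm"
  shows "0 \<le> z + max (- Dm) (min Dm (\<tau> - z))" "z + max (- Dm) (min Dm (\<tau> - z)) \<le> 1"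
    "\<bar>max (- Dm) (min Dm (\<tau> - z))\<bar> \<le> Dm"
  using assms by (auto simp: max_def min_def)

theorem lemma8:
  fixes n :: nat and r \<omega> :: "nat \<Rightarrow> real" and \<eta> \<epsilon> :: real
  assumes "n \<ge> 3"
    and "\<forall>i<n. 0 < r i \<and> r i \<le> 1"
    and "\<forall>i<n. 0 < \<omega> i \<and> \<omega> i < 1"
    and "\<eta> > 0"
    and "0 < \<epsilon>" and "\<epsilon> < \<eta>"
  shows "ft_robustly_reachable n r \<omega> \<eta>
           (E_set n (min (Max {a_coef n \<omega> \<eta> i j | i j. i < n \<and> j < n \<and> i \<noteq> j} - 2 * \<epsilon>) 1))"
proof -
  note n3 = assms(1) and rA = assms(2) and wA = assms(3) and eta = assms(4) and e0 = assms(5) and e1 = assms(6)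
  have n0: "0 < n" and rn0: "real n > 0" using n3 by auto
  define Aset where "Aset = {a_coef n \<omega> \<eta> i j | i j. i < n \<and> j < n \<and> i \<noteq> j}"
  define M where "M = Max Aset"
  define c where "c = min (M - 2 * \<epsilon>) 1"
  have ceq: "min (Max {a_coef n \<omega> \<eta> i j | i j. i < n \<and> j < n \<and> i \<noteq> j} - 2 * \<epsilon>) 1 = c"
    unfolding c_def M_def Aset_def ..
  have finA: "finite Aset"
  proof -
    have "Aset \<subseteq> (\<lambda>(i,j). a_coef n \<omega> \<eta> i j) ` ({..<n} \<times> {..<n})" unfolding Aset_def by auto
    thus ?thesis by (rule finite_subset) auto
  qed
  have "(0::nat) < n" "(1::nat) < n" "(0::nat) \<noteq> 1" using n3 by auto
  hence "a_coef n \<omega> \<eta> 0 1 \<in> Aset" unfolding Aset_def by blast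
  hence "M \<in> Aset" unfolding M_def using finA Max_in by blast
  then obtain i0 j0 where i0: "i0 < n" and j0: "j0 < n" and ij: "i0 \<noteq> j0" and Meq0: "M = a_coef n \<omega> \<eta> i0 j0"
    unfolding Aset_def by blast
  define g where "g k = real (n-1) * (1 - \<omega> k) / real n" for k
  have gpos: "0 < g k" and glt: "g k < 1" if "k < n" for k
  proof -
    have w: "0 < \<omega> k" "\<omega> k < 1" using wA that by auto
    have n1: "real (n-1) > 0" using n3 by simp
    show "0 < g k" unfolding g_def using w n1 rn0 by simp
    have "real (n-1) * (1 - \<omega> k) \<le> real (n-1) * 1" using w n1 by (intro mult_left_mono) auto
    also have "\<dots> < real n" using n3 by simp
    finally show "g k < 1" unfolding g_def using rn0 by simp
  qed
  have Meq: "M = (g i0 + g j0) * \<eta>"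
    unfolding Meq0 a_coef_def g_def using rn0 by (simp add: field_simps)
  define \<omega>m where "\<omega>m = Min (\<omega> ` {..<n})"
  define rm where "rm = Min (r ` {..<n})"
  define gm where "gm = Min (g ` {..<n})"
  have wm_le: "\<omega>m \<le> \<omega> k" and rm_le: "rm \<le> r k" and gm_le: "gm \<le> g k" if "k < n" for k
    using that unfolding \<omega>m_def rm_def gm_def by auto
  have "\<omega>m \<in> \<omega> ` {..<n}" "rm \<in> r ` {..<n}" "gm \<in> g ` {..<n}"
    unfolding \<omega>m_def rm_def gm_def using n0 by (auto intro!: Min_in)
  then obtain k1 k2 k3 where "k1 < n" "\<omega>m = \<omega> k1" "k2 < n" "rm = r k2" "k3 < n" "gm = g k3" by auto
  hence wm0: "0 < \<omega>m" "\<omega>m < 1" and rm0: "0 < rm" "rm \<le> 1" and gm0: "0 < gm" "gm < 1"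
    using wA rA gpos glt by auto
  define \<mu>0 where "\<mu>0 = min 1 (min (gm * \<eta> / 2) \<epsilon>)"
  have mu: "0 < \<mu>0" "\<mu>0 \<le> 1" "\<mu>0 \<le> gm * \<eta> / 2" "\<mu>0 \<le> \<epsilon>"
    unfolding \<mu>0_def using gm0 eta e0 by auto
  define \<delta> where "\<delta> = min (\<epsilon>/4) (min (rm/2) (min (\<omega>m*rm/4) (min (\<mu>0/4) (gm*\<eta>/4))))"
  have d: "0 < \<delta>" "\<delta> \<le> \<epsilon>/4" "\<delta> \<le> rm/2" "\<delta> \<le> \<omega>m*rm/4" "\<delta> \<le> \<mu>0/4" "\<delta> \<le> gm*\<eta>/4"
    unfolding \<delta>_def using e0 rm0 wm0 mu gm0 eta by auto
  have d_eta: "\<delta> < \<eta>" using d e1 e0 by linarith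
  have "gm * \<eta> < 1 * \<eta>" using gm0 eta by (intro mult_strict_right_mono) auto
  hence d_eta4: "\<delta> < \<eta> / 4" using d by linarith
  define Dm where "Dm = gm * (\<eta> - \<delta>)"
  have "gm * \<delta> \<le> 1 * \<delta>" using gm0 d by (intro mult_right_mono) auto
  hence gd: "gm * \<delta> \<le> \<delta>" by simp
  have "Dm = gm * \<eta> - gm * \<delta>" unfolding Dm_def by (simp add: algebra_simps)
  hence Dm3: "3 * \<delta> \<le> Dm" using gd d by linarith
  have Dm0: "0 < Dm" using Dm3 d by linarith
  define A where "A = g i0 * (\<eta> - 2 * \<delta>)"
  define Bv where "Bv = g j0 * (\<eta> - 2 * \<delta>)"
  have "gm * (\<eta> / 2) \<le> g i0 * (\<eta> / 2)" using gm_le[OF i0] eta by (intro mult_right_mono) auto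
  also have "\<dots> \<le> g i0 * (\<eta> - 2 * \<delta>)" using gpos[OF i0] d_eta4 by (intro mult_left_mono) auto
  finally have A_ge: "gm * \<eta> / 2 \<le> A" unfolding A_def by simp
  have "gm * (\<eta> / 2) \<le> g j0 * (\<eta> / 2)" using gm_le[OF j0] eta by (intro mult_right_mono) auto
  also have "\<dots> \<le> g j0 * (\<eta> - 2 * \<delta>)" using gpos[OF j0] d_eta4 by (intro mult_left_mono) auto
  finally have B_ge: "gm * \<eta> / 2 \<le> Bv" unfolding Bv_def by simp
  have "(g i0 + g j0) * (2 * \<delta>) \<le> 2 * (2 * \<delta>)" using glt[OF i0] glt[OF j0] d by (intro mult_right_mono) auto
  hence AB: "c + \<epsilon> \<le> A + Bv" unfolding A_def Bv_def c_def using Meq d by (simp add: algebra_simps)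
  have c1: "c \<le> 1" unfolding c_def by simp
  define lo where "lo = max 0 (c - A)"
  define hi where "hi = min 1 (1 - c + Bv)"
  define \<tau> where "\<tau> = (lo + hi) / 2"
  have hl: "\<mu>0 \<le> hi - lo" unfolding hi_def lo_def using mu A_ge B_ge AB c1
    by (auto simp: max_def min_def)
  have tau01: "0 \<le> \<tau>" "\<tau> \<le> 1" unfolding \<tau>_def using hl mu by (auto simp: lo_def hi_def)
  obtain T1 where T1: "(1 - \<omega>m) ^ T1 < rm / 2" using real_arch_pow_inv[of "rm/2" "1 - \<omega>m"] rm0 wm0 by auto
  define T2 where "T2 = nat \<lceil>2 / Dm\<rceil>"
  have T2ge: "2 / Dm \<le> real T2" unfolding T2_def by linarith
  hence T2le: "1 - real T2 * Dm / 2 \<le> 0" using Dm0 by (simp add: field_simps)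
  define T where "T = Suc (T1 + T2)"
  define Df where "Df x = max (- Dm) (min Dm (\<tau> - x_ave n x))" for x
  define V where "V t x i = (if t < T1 then 0 else if t < T1 + T2 then Df x / g i
      else if i = i0 then \<eta> - \<delta> else if i = j0 then - (\<eta> - \<delta>) else 0)" for t x i
  define D where "D = (\<lambda>(t::nat) (h::(nat \<Rightarrow> real) list) (i::nat). \<delta>)"
  define U where "U = (\<lambda>(t::nat) (h::(nat \<Rightarrow> real) list) (j::nat) i. V t (last h) i)"
  have strat: "\<forall>x0\<in>cube n. (\<forall>t h i. i < n \<longrightarrow> \<delta> \<le> D t h i \<and> D t h i < \<eta>) \<and>
           (\<forall>t h i j. i < n \<longrightarrow> j < n \<longrightarrow> \<bar>U t h j i\<bar> \<le> \<eta> - D t h i) \<and>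
           (\<forall>B. (\<forall>t<T. \<forall>i<n. \<forall>j\<in>nbr n r (traj_C6 n r \<omega> x0 D U B t) i - {i}.
                     \<bar>B t j i\<bar> \<le> D t (hist_C6 n r \<omega> x0 D U B t) i)
                \<longrightarrow> (\<exists>t\<in>{1..T}. traj_C6 n r \<omega> x0 D U B t \<in> E_set n c))"
  proof (intro ballI conjI allI impI)
    fix t h i assume "i < n"
    show "\<delta> \<le> D t h i" "D t h i < \<eta>" unfolding D_def using d_eta by auto
  next
    fix t h i j assume i: "i < n" and "j < n"
    have "\<bar>V t (last h) i\<bar> \<le> \<eta> - \<delta>"
    proof -
      have "\<bar>Df (last h) / g i\<bar> \<le> \<eta> - \<delta>"
      proof -
        have "\<bar>Df (last h)\<bar> \<le> Dm" unfolding Df_def using Dm0 by (auto simp: max_def min_def)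
        also have "Dm \<le> g i * (\<eta> - \<delta>)" unfolding Dm_def using gm_le[OF i] d_eta by (intro mult_right_mono) auto
        finally show ?thesis using gpos[OF i] by (simp add: abs_div field_simps)
      qed
      thus ?thesis unfolding V_def using d_eta by auto
    qed
    thus "\<bar>U t h j i\<bar> \<le> \<eta> - D t h i" unfolding U_def D_def by simp
  next
    fix x0 B
    assume x0: "x0 \<in> cube n"
    assume Bc: "\<forall>t<T. \<forall>i<n. \<forall>j\<in>nbr n r (traj_C6 n r \<omega> x0 D U B t) i - {i}.
                     \<bar>B t j i\<bar> \<le> D t (hist_C6 n r \<omega> x0 D U B t) i"
    define X where "X t = traj_C6 n r \<omega> x0 D U B t" for t
    have XS: "X (Suc t) = step_C6 n r \<omega> (X t) (\<lambda>j i. V t (X t) i) (B t)" for t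
    proof -
      have "last (hist_C6 n r \<omega> x0 D U B t) = X t" unfolding X_def traj_C6_def ..
      thus ?thesis unfolding X_def traj_Suc by (simp add: U_def)
    qed
    have Xc: "X t \<in> cube n" for t
      by (cases t) (auto simp: X_def traj_0 x0 XS[unfolded X_def] step_cube)
    have Xb: "0 \<le> X t k \<and> X t k \<le> 1" if "k < n" for t k using Xc[of t] that by (auto simp: cube_def)
    have Bt: "\<bar>B t j i\<bar> \<le> \<delta>" if "t < T" "i < n" "j \<in> nbr n r (X t) i - {i}" for t i j
      using Bc that unfolding X_def D_def by auto
    have ri: "0 \<le> r i" "rm \<le> r i" if "i < n" for i using rA rm_le that by auto
    have ph1: "\<exists>l. \<forall>k<n. l \<le> X t k \<and> X t k \<le> l + ((1 - \<omega>m) ^ t + rm / 2)" if "t \<le> T1" for t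
      using that
    proof (induction t)
      case 0
      have "\<forall>k<n. 0 \<le> X 0 k \<and> X 0 k \<le> 0 + ((1 - \<omega>m) ^ 0 + rm / 2)"
      proof (intro allI impI)
        fix k assume "k < n" thus "0 \<le> X 0 k \<and> X 0 k \<le> 0 + ((1 - \<omega>m) ^ 0 + rm / 2)"
          using Xb[of k 0] rm0 by simp
      qed
      thus ?case by blast
    next
      case (Suc t)
      hence tT1: "t < T1" by simp
      then obtain l where l: "\<forall>k<n. l \<le> X t k \<and> X t k \<le> l + ((1 - \<omega>m) ^ t + rm / 2)" using Suc by auto
      define s where "s = (1 - \<omega>m) ^ t + rm / 2"
      define L where "L = \<omega>m * x_ave n (X t) + (1 - \<omega>m) * l - \<delta>"
      have sb: "(1 - \<omega>m) * s + 2 * \<delta> \<le> (1 - \<omega>m) ^ Suc t + rm / 2"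
      proof -
        have "(1 - \<omega>m) * s = (1 - \<omega>m) ^ Suc t + rm / 2 - \<omega>m * rm / 2"
          unfolding s_def by (simp add: algebra_simps diff_divide_distrib)
        thus ?thesis using d by linarith
      qed
      have "\<forall>k<n. proj01 L \<le> X (Suc t) k \<and> X (Suc t) k \<le> proj01 L + ((1 - \<omega>m) ^ Suc t + rm / 2)"
      proof (intro allI impI)
        fix k assume k: "k < n"
        have "\<exists>y. L \<le> y \<and> y \<le> L + ((1 - \<omega>m) * s + 2 * \<delta>) \<and>
            step_C6 n r \<omega> (X t) (\<lambda>j i. V t (X t) i) (B t) k = proj01 y"
          unfolding L_def
          apply (rule phase1_step)
          using k ri[OF k] l[unfolded s_def[symmetric]] tT1 Bt[of t k] wm0 wm_le[OF k] wA d
          by (auto simp: V_def T_def)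
        then obtain y where y: "L \<le> y" "y \<le> L + ((1 - \<omega>m) * s + 2 * \<delta>)"
          and Xy: "X (Suc t) k = proj01 y" using XS by auto
        have "proj01 L \<le> proj01 y" using y(1) by (rule proj01_mono)
        moreover have "proj01 y \<le> proj01 L + (y - L)" using y(1) by (rule proj01_lip)
        ultimately show "proj01 L \<le> X (Suc t) k \<and> X (Suc t) k \<le> proj01 L + ((1 - \<omega>m) ^ Suc t + rm / 2)"
          using Xy y sb by linarith
      qed
      thus ?case by blast
    qed
    have ph2: "(\<exists>l. \<forall>i<n. l \<le> X (T1 + k) i \<and> X (T1 + k) i \<le> l + rm) \<and>
        \<bar>x_ave n (X (T1 + k)) - \<tau>\<bar> \<le> max \<delta> (1 - real k * Dm / 2)" if "k \<le> T2" for k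
      using that
    proof (induction k)
      case 0
      obtain l where l: "\<forall>k<n. l \<le> X T1 k \<and> X T1 k \<le> l + ((1 - \<omega>m) ^ T1 + rm / 2)" using ph1 by blast
      have "\<forall>i<n. l \<le> X (T1 + 0) i \<and> X (T1 + 0) i \<le> l + rm" using l T1 by force
      moreover have "0 \<le> x_ave n (X T1)" "x_ave n (X T1) \<le> 1" using ave_bounds[OF n0, of 0 "X T1" 1] Xb by auto
      ultimately show ?case using tau01 by (auto simp: abs_if)
    next
      case (Suc k)
      hence kT2: "k < T2" by simp
      define t where "t = T1 + k"
      have tT: "t < T" and tT1: "\<not> t < T1" and tT2: "t < T1 + T2" unfolding t_def T_def using kT2 by auto
      obtain l where l: "\<forall>i<n. l \<le> X t i \<and> X t i \<le> l + rm"
        and dist: "\<bar>x_ave n (X t) - \<tau>\<bar> \<le> max \<delta> (1 - real k * Dm / 2)" using Suc kT2 unfolding t_def by auto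
      define z where "z = x_ave n (X t)"
      define w where "w = z + Df (X t)"
      have z01: "0 \<le> z" "z \<le> 1" unfolding z_def using ave_bounds[OF n0, of 0 "X t" 1] Xb by auto
      have w01: "0 \<le> w" "w \<le> 1" unfolding w_def Df_def using nav_range[OF z01 tau01 Dm0] z_def by auto
      have near: "\<bar>X (Suc t) i - w\<bar> \<le> \<delta>" if i: "i < n" for i
      proof -
        have full: "\<forall>j<n. \<bar>X t j - X t i\<bar> \<le> r i" using spread_full[OF l _ i] ri by auto
        have N: "nbr n r (X t) i = {..<n}" using full_nbr[where x="X t" and r=r and n=n and i=i, OF i ri(1)[OF i] full] .
        have p4: "\<forall>j\<in>{..<n}-{i}. V t (X t) i = Df (X t) / g i" using tT1 tT2 by (simp add: V_def)
        have p5: "\<forall>j\<in>{..<n}-{i}. \<bar>B t j i\<bar> \<le> \<delta>" using Bt[OF tT i] N by auto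
        have p6: "\<omega> i \<le> 1" using wA i by auto
        obtain e where e: "\<bar>e\<bar> \<le> g i * \<delta>"
          and st: "step_C6 n r \<omega> (X t) (\<lambda>j i. V t (X t) i) (B t) i = proj01 (x_ave n (X t) + g i * (Df (X t) / g i) + e)"
          using full_step[where x="X t" and r=r and n=n and i=i and u="\<lambda>j i. V t (X t) i" and b="B t" and \<delta>=\<delta> and \<omega>=\<omega>, OF i ri(1)[OF i] full p4 p5 p6]
          unfolding g_def[symmetric] by blast
        have "g i * (Df (X t) / g i) = Df (X t)" using gpos[OF i] by simp
        hence X: "X (Suc t) i = proj01 (w + e)" using st XS unfolding w_def z_def by simp
        have "g i * \<delta> \<le> 1 * \<delta>" using glt[OF i] d by (intro mult_right_mono) auto
        hence "\<bar>e\<bar> \<le> \<delta>" using e by simp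
        thus ?thesis using X proj01_near[OF w01, of "w + e"] by simp
      qed
      have sp: "\<forall>i<n. w - \<delta> \<le> X (T1 + Suc k) i \<and> X (T1 + Suc k) i \<le> (w - \<delta>) + rm"
        using near d unfolding t_def by (force simp: abs_le_iff)
      have "\<forall>i<n. w - \<delta> \<le> X (Suc t) i \<and> X (Suc t) i \<le> w + \<delta>" using near by (force simp: abs_le_iff)
      hence av: "\<bar>x_ave n (X (Suc t)) - w\<bar> \<le> \<delta>" using ave_bounds[OF n0, of "w - \<delta>" "X (Suc t)" "w + \<delta>"]
        by (auto simp: abs_le_iff)
      have "\<bar>w - \<tau>\<bar> + \<delta> \<le> max \<delta> (1 - (real k + 1) * Dm / 2)"
        unfolding w_def Df_def z_def using nav_arith[OF d(1) _ dist] Dm3 d by auto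
      moreover have "max \<delta> (1 - (real k + 1) * Dm / 2) = max \<delta> (1 - real (Suc k) * Dm / 2)" by (simp add: add.commute)
      moreover have "\<bar>x_ave n (X (Suc t)) - \<tau>\<bar> \<le> \<bar>x_ave n (X (Suc t)) - w\<bar> + \<bar>w - \<tau>\<bar>" by linarith
      ultimately have "\<bar>x_ave n (X (Suc t)) - \<tau>\<bar> \<le> max \<delta> (1 - real (Suc k) * Dm / 2)"
        using av by linarith
      hence "\<bar>x_ave n (X (T1 + Suc k)) - \<tau>\<bar> \<le> max \<delta> (1 - real (Suc k) * Dm / 2)"
        unfolding t_def by simp
      thus ?case using sp by blast
    qed
    define t where "t = T1 + T2"
    obtain l where l: "\<forall>i<n. l \<le> X t i \<and> X t i \<le> l + rm"
      and dist: "\<bar>x_ave n (X t) - \<tau>\<bar> \<le> max \<delta> (1 - real T2 * Dm / 2)" using ph2[of T2] unfolding t_def by auto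
    define z where "z = x_ave n (X t)"
    have zd: "\<bar>z - \<tau>\<bar> \<le> \<delta>" using dist T2le d unfolding z_def by auto
    have zlo: "c - A \<le> z" and zhi: "z \<le> 1 - c + Bv"
    proof -
      have "c - A \<le> lo" "hi \<le> 1 - c + Bv" unfolding lo_def hi_def by auto
      moreover have "lo \<le> z" using zd hl d(1) d(5) unfolding \<tau>_def abs_le_iff by argo
      moreover have "z \<le> hi" using zd hl d(1) d(5) unfolding \<tau>_def abs_le_iff by argo
      ultimately show "c - A \<le> z" "z \<le> 1 - c + Bv" by simp_all
    qed
    have tT: "t < T" and tT1: "\<not> t < T1" and tT2: "\<not> t < T1 + T2" unfolding t_def T_def by auto
    have fs: "\<exists>e. \<bar>e\<bar> \<le> g i * \<delta> \<and> X (Suc t) i = proj01 (z + g i * v + e)"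
      if i: "i < n" and v: "\<forall>j. V t (X t) i = v" for i v
    proof -
      have full: "\<forall>j<n. \<bar>X t j - X t i\<bar> \<le> r i" using spread_full[OF l _ i] ri by auto
      have N: "nbr n r (X t) i = {..<n}" using full_nbr[where x="X t" and r=r and n=n and i=i, OF i ri(1)[OF i] full] .
      have p5: "\<forall>j\<in>{..<n}-{i}. \<bar>B t j i\<bar> \<le> \<delta>" using Bt[OF tT i] N by auto
      have p6: "\<omega> i \<le> 1" using wA i by auto
      have p4: "\<forall>j\<in>{..<n}-{i}. V t (X t) i = v" using v by auto
      show ?thesis
        using full_step[where x="X t" and r=r and n=n and i=i and u="\<lambda>j i. V t (X t) i" and b="B t" and \<delta>=\<delta> and \<omega>=\<omega>, OF i ri(1)[OF i] full p4 p5 p6]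
        unfolding g_def[symmetric] XS z_def by blast
    qed
    obtain e1 where e1: "\<bar>e1\<bar> \<le> g i0 * \<delta>" and X1: "X (Suc t) i0 = proj01 (z + g i0 * (\<eta> - \<delta>) + e1)"
      using fs[OF i0, of "\<eta> - \<delta>"] tT1 tT2 unfolding V_def by auto
    obtain e2 where e2: "\<bar>e2\<bar> \<le> g j0 * \<delta>" and X2: "X (Suc t) j0 = proj01 (z + g j0 * (- (\<eta> - \<delta>)) + e2)"
      using fs[OF j0, of "- (\<eta> - \<delta>)"] tT1 tT2 ij unfolding V_def by auto
    have y1: "z + A \<le> z + g i0 * (\<eta> - \<delta>) + e1" using e1 unfolding A_def by (simp add: algebra_simps abs_le_iff)
    have y2: "z + g j0 * (- (\<eta> - \<delta>)) + e2 \<le> z - Bv" using e2 unfolding Bv_def by (simp add: algebra_simps abs_le_iff)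
    have cx: "c \<le> X (Suc t) i0 - X (Suc t) j0"
      unfolding X1 X2 by (rule proj01_split) (use c1 y1 y2 zlo zhi AB e0 in linarith)+
    have finP: "finite {\<bar>X (Suc t) i - X (Suc t) j\<bar> | i j. i < n \<and> j < n}"
    proof -
      have "{\<bar>X (Suc t) i - X (Suc t) j\<bar> | i j. i < n \<and> j < n} \<subseteq> (\<lambda>(i,j). \<bar>X (Suc t) i - X (Suc t) j\<bar>) ` ({..<n} \<times> {..<n})"
        by auto
      thus ?thesis by (rule finite_subset) auto
    qed
    have "\<bar>X (Suc t) i0 - X (Suc t) j0\<bar> \<le> Max {\<bar>X (Suc t) i - X (Suc t) j\<bar> | i j. i < n \<and> j < n}"
      using i0 j0 by (intro Max_ge[OF finP]) auto
    hence "X T \<in> E_set n c" using cx Xc unfolding E_set_def T_def t_def by auto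
    moreover have "T \<in> {1..T}" unfolding T_def by simp
    ultimately show "\<exists>t\<in>{1..T}. traj_C6 n r \<omega> x0 D U B t \<in> E_set n c" unfolding X_def by blast
  qed
  show ?thesis unfolding ft_robustly_reachable_def ceq
    apply (rule exI[of _ T])
    apply (rule conjI, simp add: T_def)
    apply (rule exI[of _ \<delta>])
    apply (intro conjI d(1) d_eta ballI disjI2)
    apply (rule exI[of _ D], rule exI[of _ U])
    apply (erule bspec[OF strat])
    done
qed

end
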